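(* Let $\{s_j\}_{j=1}^\infty$ be a countable compact subset of $[0,1]$ containing $0$. Let $U(x,y)=\left(\frac{x}{2},\frac{y+1}{2}\right)$ and $D_j(x,y)=\left(\frac{x+s_j}{2},\frac{y}{2}\right)$ for $j\ge1$, and let $K'\subset\mathbb{R}^2$ be the unique non-empty compact set with $K'=U(K')\cup\bigcup_{j\ge1}D_j(K')$. Then $K'$ has empty interior. *)

theory Defs
  imports "HOL-Analysis.Analysis"
begin

definition U_map :: "real \<times> real \<Rightarrow> real \<times> real" where
  "U_map p = (fst p / 2, (snd p + 1) / 2)"

definition D_map :: "real \<Rightarrow> real \<times> real \<Rightarrow> real \<times> real" where
  "D_map t p = ((fst p + t) / 2, snd p / 2)"

end

theory Submission
  imports Defs
begin

primrec Cset :: "real set \<Rightarrow> nat \<Rightarrow> real set" where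
  "Cset S 0 = {0}"
| "Cset S (Suc n) = (\<lambda>z. (fst z + snd z) / 2) ` (Cset S n \<times> S)"

lemma Cset_compact: "compact S \<Longrightarrow> compact (Cset S n)"
proof (induction n)
  case 0 then show ?case by simp
next
  case (Suc n)
  have "continuous_on (Cset S n \<times> S) (\<lambda>z. (fst z + snd z) / 2)"
    by (intro continuous_intros) auto
  then show ?case unfolding Cset.simps
    by (rule compact_continuous_image[OF _ compact_Times[OF Suc.IH[OF Suc.prems] Suc.prems]])
qed

lemma Cset_countable: "countable S \<Longrightarrow> countable (Cset S n)"
  by (induction n) auto

lemma memK:
  assumes hK: "K = U_map ` K \<union> (\<Union>j\<in>{1..}. D_map (s j) ` K)"
    and "p \<in> K"
  shows "(\<exists>q\<in>K. p = U_map q) \<or> (\<exists>j\<ge>1. \<exists>q\<in>K. p = D_map (s j) q)"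
proof -
  have "p \<in> U_map ` K \<union> (\<Union>j\<in>{1..}. D_map (s j) ` K)"
    using equalityD1[OF hK] assms(2) by (rule subsetD)
  then show ?thesis by blast
qed

lemma boundsK:
  fixes s :: "nat \<Rightarrow> real" and K :: "(real \<times> real) set"
  assumes hs: "s ` {1..} \<subseteq> {0..1}"
    and cK: "compact K" and ne: "K \<noteq> {}"
    and hK: "K = U_map ` K \<union> (\<Union>j\<in>{1..}. D_map (s j) ` K)"
    and p: "p \<in> K"
  shows "0 \<le> fst p \<and> fst p \<le> 1 \<and> 0 \<le> snd p \<and> snd p \<le> 1"
proof -
  have sj: "\<And>j. j \<ge> 1 \<Longrightarrow> 0 \<le> s j \<and> s j \<le> 1" using hs by (simp add: image_subset_iff)
  have cf1: "compact (fst ` K)"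
    using cK by (rule compact_continuous_image[rotated]) (intro continuous_intros)
  have cf2: "compact (snd ` K)"
    using cK by (rule compact_continuous_image[rotated]) (intro continuous_intros)
  note cf = cf1 cf2
  have nf: "fst ` K \<noteq> {}" "snd ` K \<noteq> {}" using ne by simp_all
  obtain a where a: "a \<in> fst ` K" "\<forall>y\<in>fst ` K. y \<le> a" using compact_attains_sup[OF cf(1) nf(1)] by blast
  obtain b where b: "b \<in> fst ` K" "\<forall>y\<in>fst ` K. b \<le> y" using compact_attains_inf[OF cf(1) nf(1)] by blast
  obtain c where c: "c \<in> snd ` K" "\<forall>y\<in>snd ` K. y \<le> c" using compact_attains_sup[OF cf(2) nf(2)] by blast
  obtain d where d: "d \<in> snd ` K" "\<forall>y\<in>snd ` K. d \<le> y" using compact_attains_inf[OF cf(2) nf(2)] by blast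
  have "a \<le> 1"
  proof -
    obtain q where q: "q \<in> K" "a = fst q" using a(1) by blast
    from memK[OF hK q(1)] show ?thesis
    proof
      assume "\<exists>r\<in>K. q = U_map r"
      then obtain r where "r \<in> K" "q = U_map r" by blast
      moreover have "fst r \<le> a" using a(2) \<open>r \<in> K\<close> by (simp add: image_iff)
      ultimately show ?thesis using q by (simp add: U_map_def)
    next
      assume "\<exists>j\<ge>1. \<exists>r\<in>K. q = D_map (s j) r"
      then obtain j r where "j \<ge> 1" "r \<in> K" "q = D_map (s j) r" by blast
      moreover have "fst r \<le> a" using a(2) \<open>r \<in> K\<close> by (simp add: image_iff)
      ultimately show ?thesis using q sj[of j] by (simp add: D_map_def)
    qed
  qed
  moreover have "b \<ge> 0"
  proof -
    obtain q where q: "q \<in> K" "b = fst q" using b(1) by blast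
    from memK[OF hK q(1)] show ?thesis
    proof
      assume "\<exists>r\<in>K. q = U_map r"
      then obtain r where "r \<in> K" "q = U_map r" by blast
      moreover have "b \<le> fst r" using b(2) \<open>r \<in> K\<close> by (simp add: image_iff)
      ultimately show ?thesis using q by (simp add: U_map_def)
    next
      assume "\<exists>j\<ge>1. \<exists>r\<in>K. q = D_map (s j) r"
      then obtain j r where "j \<ge> 1" "r \<in> K" "q = D_map (s j) r" by blast
      moreover have "b \<le> fst r" using b(2) \<open>r \<in> K\<close> by (simp add: image_iff)
      ultimately show ?thesis using q sj[of j] by (simp add: D_map_def)
    qed
  qed
  moreover have "c \<le> 1"
  proof -
    obtain q where q: "q \<in> K" "c = snd q" using c(1) by blast
    from memK[OF hK q(1)] show ?thesis
    proof
      assume "\<exists>r\<in>K. q = U_map r"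
      then obtain r where "r \<in> K" "q = U_map r" by blast
      moreover have "snd r \<le> c" using c(2) \<open>r \<in> K\<close> by (simp add: image_iff)
      ultimately show ?thesis using q by (simp add: U_map_def)
    next
      assume "\<exists>j\<ge>1. \<exists>r\<in>K. q = D_map (s j) r"
      then obtain j r where "j \<ge> 1" "r \<in> K" "q = D_map (s j) r" by blast
      moreover have "snd r \<le> c" using c(2) \<open>r \<in> K\<close> by (simp add: image_iff)
      ultimately show ?thesis using q by (simp add: D_map_def)
    qed
  qed
  moreover have "d \<ge> 0"
  proof -
    obtain q where q: "q \<in> K" "d = snd q" using d(1) by blast
    from memK[OF hK q(1)] show ?thesis
    proof
      assume "\<exists>r\<in>K. q = U_map r"
      then obtain r where "r \<in> K" "q = U_map r" by blast
      moreover have "d \<le> snd r" using d(2) \<open>r \<in> K\<close> by (simp add: image_iff)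
      ultimately show ?thesis using q by (simp add: U_map_def)
    next
      assume "\<exists>j\<ge>1. \<exists>r\<in>K. q = D_map (s j) r"
      then obtain j r where "j \<ge> 1" "r \<in> K" "q = D_map (s j) r" by blast
      moreover have "d \<le> snd r" using d(2) \<open>r \<in> K\<close> by (simp add: image_iff)
      ultimately show ?thesis using q by (simp add: D_map_def)
    qed
  qed
  moreover have "fst p \<le> a" "b \<le> fst p" "snd p \<le> c" "d \<le> snd p" using a(2) b(2) c(2) d(2) p by (simp_all add: image_iff)
  ultimately show ?thesis by linarith
qed

lemma topL:
  fixes s :: "nat \<Rightarrow> real" and K :: "(real \<times> real) set"
  assumes hK: "K = U_map ` K \<union> (\<Union>j\<in>{1..}. D_map (s j) ` K)"
    and bnd: "\<forall>q\<in>K. 0 \<le> fst q \<and> fst q \<le> 1 \<and> 0 \<le> snd q \<and> snd q \<le> 1"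
  shows "q \<in> K \<Longrightarrow> snd q > 1 - 1/2^L \<Longrightarrow> fst q \<le> 1/2^L"
proof (induction L arbitrary: q)
  case 0 then show ?case using bnd by auto
next
  case (Suc L)
  have "snd q > 1/2"
  proof -
    have "(1::real)/2^Suc L \<le> 1/2" by (simp add: field_simps)
    then show ?thesis using Suc.prems(2) by linarith
  qed
  from memK[OF hK Suc.prems(1)] show ?case
  proof
    assume "\<exists>r\<in>K. q = U_map r"
    then obtain r where r: "r \<in> K" "q = U_map r" by blast
    have "snd q = (snd r + 1)/2" using r by (simp add: U_map_def)
    obtain u where u: "u = (1::real)/2^L" by blast
    have "1/(2::real)^Suc L = u/2" using u by simp
    then have "snd q > 1 - u/2" using Suc.prems(2) by simp
    then have "snd r > 1 - u" using \<open>snd q = (snd r + 1)/2\<close> by (simp add: field_simps)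
    then have "snd r > 1 - 1/2^L" using u by simp
    then have "fst r \<le> 1/2^L" using Suc.IH r(1) by blast
    then have "fst r / 2 \<le> (1/2^L)/2" by (rule divide_right_mono) simp
    moreover have "fst q = fst r / 2" using r by (simp add: U_map_def)
    ultimately show ?thesis by simp
  next
    assume "\<exists>j\<ge>1. \<exists>r\<in>K. q = D_map (s j) r"
    then obtain j r where r: "r \<in> K" "q = D_map (s j) r" by blast
    have "snd q = snd r / 2" using r by (simp add: D_map_def)
    moreover have "snd r \<le> 1" using bnd r(1) by auto
    ultimately show ?thesis using \<open>snd q > 1/2\<close> by linarith
  qed
qed

lemma decomp:
  fixes s :: "nat \<Rightarrow> real" and K :: "(real \<times> real) set"
  assumes hK: "K = U_map ` K \<union> (\<Union>j\<in>{1..}. D_map (s j) ` K)"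
    and z: "0 \<in> s ` {1..}"
  shows "p \<in> K \<Longrightarrow> \<exists>q\<in>K. \<exists>c\<in>Cset (s ` {1..}) n. \<exists>k::int.
            p = (c + fst q / 2^n, k / 2^n + snd q / 2^n)"
proof (induction n arbitrary: p)
  case 0
  have "p = (0 + fst p / 2^0, real_of_int 0 / 2^0 + snd p / 2^0)" by simp
  then show ?case using 0 by (metis Cset.simps(1) singletonI)
next
  case (Suc n)
  from memK[OF hK Suc.prems(1)] show ?case
  proof
    assume "\<exists>r\<in>K. p = U_map r"
    then obtain r where r: "r \<in> K" "p = U_map r" by blast
    from Suc.IH[OF r(1)] obtain q c k where q: "q \<in> K" "c \<in> Cset (s ` {1..}) n"
      "r = (c + fst q / 2^n, real_of_int k / 2^n + snd q / 2^n)" by blast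
    have c': "c/2 \<in> Cset (s ` {1..}) (Suc n)"
    proof -
      have "(c, 0) \<in> Cset (s ` {1..}) n \<times> s ` {1..}" using q(2) z by auto
      then have "(fst (c,0::real) + snd (c,0::real))/2 \<in> Cset (s ` {1..}) (Suc n)"
        by (simp only: Cset.simps) (rule imageI)
      then show ?thesis by simp
    qed
    have "p = (c/2 + fst q / 2^Suc n, real_of_int (k + 2^n) / 2^Suc n + snd q / 2^Suc n)"
      using r(2) q(3) by (simp add: U_map_def field_simps)
    then show ?thesis using q(1) c' by blast
  next
    assume "\<exists>j\<ge>1. \<exists>r\<in>K. p = D_map (s j) r"
    then obtain j r where r: "j \<ge> 1" "r \<in> K" "p = D_map (s j) r" by blast
    from Suc.IH[OF r(2)] obtain q c k where q: "q \<in> K" "c \<in> Cset (s ` {1..}) n"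
      "r = (c + fst q / 2^n, real_of_int k / 2^n + snd q / 2^n)" by blast
    have c': "(c + s j)/2 \<in> Cset (s ` {1..}) (Suc n)"
    proof -
      have "(c, s j) \<in> Cset (s ` {1..}) n \<times> s ` {1..}" using q(2) r(1) by auto
      then have "(fst (c,s j) + snd (c,s j))/2 \<in> Cset (s ` {1..}) (Suc n)"
        by (simp only: Cset.simps) (rule imageI)
      then show ?thesis by simp
    qed
    have "p = ((c + s j)/2 + fst q / 2^Suc n, real_of_int k / 2^Suc n + snd q / 2^Suc n)"
      using r(3) q(3) by (simp add: D_map_def field_simps)
    then show ?thesis using q(1) c' by blast
  qed
qed

lemma pow_small: "(\<epsilon>::real) > 0 \<Longrightarrow> \<exists>n. 1/(2::real)^n < \<epsilon>"
proof -
  assume e: "\<epsilon> > 0"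
  obtain n where n: "1/\<epsilon> < real n" using reals_Archimedean2 by blast
  have "real n < 2^n" by (metis of_nat_less_iff of_nat_numeral of_nat_power less_exp)
  then have "1/\<epsilon> < 2^n" using n by linarith
  then have "1 < \<epsilon> * 2^n" using e by (simp add: field_simps)
  then show ?thesis by (intro exI[of _ n]) (simp add: field_simps)
qed

theorem mainTheorem7:
  fixes s :: "nat \<Rightarrow> real" and K :: "(real \<times> real) set"
  assumes "compact (s ` {1..})"
    and "s ` {1..} \<subseteq> {0..1}"
    and "0 \<in> s ` {1..}"
    and "compact K" and "K \<noteq> {}"
    and "K = U_map ` K \<union> (\<Union>j\<in>{1..}. D_map (s j) ` K)"
  shows "interior K = {}"
proof (rule ccontr)
  assume "interior K \<noteq> {}"
  then obtain z where "z \<in> interior K" by blast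
  then obtain e where e: "e > 0" "ball z e \<subseteq> K" using mem_interior by blast
  obtain x0 y0 where z: "z = (x0, y0)" by (cases z)
  have bnd: "\<forall>q\<in>K. 0 \<le> fst q \<and> fst q \<le> 1 \<and> 0 \<le> snd q \<and> snd q \<le> 1"
    using boundsK[OF assms(2,4,5,6)] by blast
  obtain N where N: "1/(2::real)^N < e/2" using pow_small[of "e/2"] e by auto
  define C where "C = Cset (s ` {1..}) N"
  have cC: "closed C" unfolding C_def using Cset_compact[OF assms(1)] compact_imp_closed by blast
  have ctC: "countable C" unfolding C_def by (intro Cset_countable) auto
  define m where "m = \<lfloor>y0 * 2^N\<rfloor>"
  have m1: "m \<le> y0 * 2^N" "y0 * 2^N < m + 1" unfolding m_def by linarith+
  have pN: "(0::real) < 2^N" by simp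
  have sub: "{x0 - e/2<..<x0 + e/2} \<subseteq> C"
  proof
    fix x assume x: "x \<in> {x0 - e/2<..<x0 + e/2}"
    have cl: "\<exists>c\<in>C. dist c x \<le> 1/2^L" for L :: nat
    proof -
      define y where "y = (real_of_int m + 1 - 1/2^(L+1)) / 2^N"
      have hL0: "(1::real) < 2^(L+1)" by (rule one_less_power) auto
      have hL: "0 < 1/(2::real)^(L+1)" "1/(2::real)^(L+1) < 1" using hL0 by (auto simp: field_simps)
      have y2: "y * 2^N = real_of_int m + 1 - 1/2^(L+1)" unfolding y_def using pN by simp
      have "\<bar>y * 2^N - y0 * 2^N\<bar> = \<bar>(y - y0) * 2^N\<bar>" by (simp only: left_diff_distrib)
      then have "\<bar>y - y0\<bar> * 2^N = \<bar>y * 2^N - y0 * 2^N\<bar>" by (simp add: abs_mult)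
      also have "\<dots> < 1" using y2 m1 hL by linarith
      finally have "\<bar>y - y0\<bar> < 1/2^N" using pN by (simp add: field_simps)
      then have ay: "\<bar>y - y0\<bar> < e/2" using N by linarith
      have ax1: "x - x0 < e/2" "x0 - x < e/2" using x by auto
      then have ax: "\<bar>x - x0\<bar> < e/2" unfolding abs_less_iff by linarith
      have "\<bar>x - x0\<bar>^2 < (e/2)^2" by (rule power_strict_mono) (use ax in auto)
      then have sx: "(x - x0)^2 < (e/2)^2" by simp
      have "\<bar>y - y0\<bar>^2 < (e/2)^2" by (rule power_strict_mono) (use ay in auto)
      then have sy: "(y - y0)^2 < (e/2)^2" by simp
      have e4: "(e/2)^2 = e^2/4" by (simp add: power_divide)
      have "e^2 > 0" using e(1) by simp
      then have "(x - x0)^2 + (y - y0)^2 < e^2" using sx sy e4 by linarith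
      then have "sqrt ((x - x0)^2 + (y - y0)^2) < sqrt (e^2)" by (rule real_sqrt_less_mono)
      also have "sqrt (e^2) = e" using e(1) by simp
      finally have sq: "sqrt ((x - x0)^2 + (y - y0)^2) < e" .
      have "dist z (x, y) = sqrt ((x0 - x)^2 + (y0 - y)^2)"
        unfolding z dist_Pair_Pair dist_real_def by simp
      also have "\<dots> = sqrt ((x - x0)^2 + (y - y0)^2)" by (simp add: power2_commute)
      finally have "dist z (x, y) < e" using sq by simp
      then have "(x, y) \<in> K" using e(2) by auto
      from decomp[OF assms(6) assms(3) this, of N] obtain q c k where
        q: "q \<in> K" "c \<in> C" "(x, y) = (c + fst q / 2^N, real_of_int k / 2^N + snd q / 2^N)"
        unfolding C_def by blast
      have qb: "0 \<le> snd q" "snd q \<le> 1" "0 \<le> fst q" using bnd q(1) by auto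
      have yk: "y * 2^N = real_of_int k + snd q" using q(3) pN by (simp add: field_simps)
      have "real_of_int k < real_of_int m + 1" "real_of_int k > real_of_int m - 1"
        using yk y2 qb hL by linarith+
      then have "real_of_int k < real_of_int (m + 1)" "real_of_int k > real_of_int (m - 1)" by simp_all
      then have "k < m + 1" "k > m - 1" by (simp only: of_int_less_iff)+
      then have "k = m" by linarith
      then have "snd q = 1 - 1/2^(L+1)" using yk y2 by linarith
      moreover have "1/(2::real)^(L+1) < 1/2^L"
      proof -
        have "(1::real) \<le> 2^L" by simp
        then have "1 < 2*(2::real)^L" by linarith
        then show ?thesis by (simp add: field_simps)
      qed
      ultimately have "snd q > 1 - 1/2^L" by linarith
      then have fq: "fst q \<le> 1/2^L" using topL[OF assms(6) bnd q(1)] by blast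
      have xc: "x - c = fst q / 2^N" using q(3) by simp
      have "fst q / 2^N \<le> fst q / 1" by (rule divide_left_mono) (use qb(3) in auto)
      then have "fst q / 2^N \<le> fst q" by simp
      then have h1: "x - c \<le> 1/2^L" using xc fq by linarith
      have h0: "0 \<le> x - c" using xc qb(3) by simp
      have "dist c x \<le> 1/2^L" unfolding dist_real_def abs_le_iff using h0 h1 by linarith
      then show ?thesis using q(2) by blast
    qed
    have "\<forall>\<epsilon>>0. \<exists>c\<in>C. dist c x < \<epsilon>"
    proof (intro allI impI)
      fix \<epsilon> :: real assume "\<epsilon> > 0"
      then obtain L where L: "1/(2::real)^L < \<epsilon>" using pow_small by blast
      obtain c where c: "c \<in> C" "dist c x \<le> 1/2^L" using cl[of L] by blast
      have "dist c x < \<epsilon>" using L c(2) by linarith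
      then show "\<exists>c\<in>C. dist c x < \<epsilon>" using c(1) by blast
    qed
    then show "x \<in> C" using closed_approachable[OF cC] by blast
  qed
  have "uncountable {x0 - e/2<..<x0 + e/2}" using uncountable_open_interval e(1) by simp
  then show False using sub ctC countable_subset by blast
qed

end
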